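(* Let $f\colon(\mathbb R^d)^n\to\mathbb R^d$ be measurable and $(C_{\mathsf{MSE}},\frac dn)$-uniformly MSE-accurate for $\{\mathcal N(\mu,\mathbb I_d)\}_{\mu\in\mathbb R^d}$, and fix $\rho>0$. Then there exist $u\in\mathbb S^{d-1}$ and $\lambda_*\in u^\perp$ such that the scalar estimator $g_{\lambda_*}$ satisfies \[\mathbb E_{\mu'\sim\mathcal N(0,\rho^2)}\mathbb E_{T\sim\mathcal N(\mu',1)^{\otimes n}}[(g_{\lambda_*}(T)-\mu')^2]\le\frac{C_{\mathsf{MSE}}}{n}.\]
   Context: $f$ is $(C_{\mathsf{MSE}},\frac dn)$-uniformly MSE-accurate if $\sup_{\mu\in\mathbb R^d}\mathbb E_{X\sim\mathcal N(\mu,\mathbb I_d)^{\otimes n}}\|f(X)-\mu\|_2^2\le C_{\mathsf{MSE}}\frac dn$. For $u\in\mathbb S^{d-1}$ and $\lambda\in u^\perp$, with $Z_1,\dots,Z_n$ i.i.d. $\mathcal N(0,\mathbb I_d)$ and $V_i=\lambda+(\mathbb I_d-uu^\top)Z_i$, the scalar estimator is $g_\lambda(t)=\mathbb E_Z[\langle u,f(t_1u+V_1,\dots,t_nu+V_n)\rangle]$ for $t\in\mathbb R^n$ (defined wherever this expectation exists). *)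

theory Defs
  imports "HOL-Probability.Probability"
begin

definition gauss_density :: "'a::euclidean_space \<Rightarrow> 'a \<Rightarrow> real" where
  "gauss_density \<mu> x = (2 * pi) powr (- real DIM('a) / 2) * exp (- (norm (x - \<mu>))\<^sup>2 / 2)"

definition gauss :: "'a::euclidean_space \<Rightarrow> 'a measure" where
  "gauss \<mu> = density lborel (\<lambda>x. ennreal (gauss_density \<mu> x))"

definition samples :: "nat \<Rightarrow> 'a measure \<Rightarrow> (nat \<Rightarrow> 'a) measure" where
  "samples n M = PiM {..<n} (\<lambda>_. M)"

definition unif_MSE_accurate :: "((nat \<Rightarrow> 'a::euclidean_space) \<Rightarrow> 'a) \<Rightarrow> nat \<Rightarrow> real \<Rightarrow> bool" where
  "unif_MSE_accurate f n C \<longleftrightarrow>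
     (SUP \<mu>. \<integral>\<^sup>+ X. ennreal ((norm (f X - \<mu>))\<^sup>2) \<partial>samples n (gauss \<mu>))
       \<le> ennreal (C * real DIM('a) / real n)"

text \<open>The integrand defining the scalar estimator g_lambda(t), Z_i i.i.d. N(0,I_d),
  V_i = lambda + (I - u u^T) Z_i.\<close>
definition g_integrand :: "((nat \<Rightarrow> 'a::euclidean_space) \<Rightarrow> 'a) \<Rightarrow> nat \<Rightarrow> 'a \<Rightarrow> 'a
    \<Rightarrow> (nat \<Rightarrow> real) \<Rightarrow> (nat \<Rightarrow> 'a) \<Rightarrow> real" where
  "g_integrand f n u lam t Z =
     inner u (f (\<lambda>i\<in>{..<n}. t i *\<^sub>R u + (lam + (Z i - (inner u (Z i)) *\<^sub>R u))))"

definition g_est :: "((nat \<Rightarrow> 'a::euclidean_space) \<Rightarrow> 'a) \<Rightarrow> nat \<Rightarrow> 'a \<Rightarrow> 'a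
    \<Rightarrow> (nat \<Rightarrow> real) \<Rightarrow> real" where
  "g_est f n u lam t = (\<integral> Z. g_integrand f n u lam t Z \<partial>samples n (gauss 0))"

end

theory Submission
  imports Defs
begin

lemma density_shift:
  fixes g :: "'b::euclidean_space \<Rightarrow> real" and \<mu> :: 'b
  assumes [measurable]: "g \<in> borel_measurable borel"
  shows "density lborel (\<lambda>x. ennreal (g (x - \<mu>))) = distr (density lborel (\<lambda>x. ennreal (g x))) borel (\<lambda>z. z + \<mu>)"
proof (rule measure_eqI)
  show "sets (density lborel (\<lambda>x. ennreal (g (x - \<mu>)))) = sets (distr (density lborel (\<lambda>x. ennreal (g x))) borel (\<lambda>z. z + \<mu>))"
    by simp
next
  fix A assume "A \<in> sets (density lborel (\<lambda>x. ennreal (g (x - \<mu>))))"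
  then have A[measurable]: "A \<in> sets borel" by simp
  have "emeasure (density lborel (\<lambda>x. ennreal (g (x - \<mu>)))) A = (\<integral>\<^sup>+x. ennreal (g (x - \<mu>)) * indicator A x \<partial>lborel)"
    by (simp add: emeasure_density)
  also have "\<dots> = (\<integral>\<^sup>+x. ennreal (g (x - \<mu>)) * indicator A x \<partial>distr lborel borel ((+) \<mu>))"
    by (simp add: lborel_distr_plus)
  also have "\<dots> = (\<integral>\<^sup>+z. ennreal (g z) * indicator A (z + \<mu>) \<partial>lborel)"
    by (subst nn_integral_distr) (auto simp: add.commute)
  also have "\<dots> = emeasure (distr (density lborel (\<lambda>x. ennreal (g x))) borel (\<lambda>z. z + \<mu>)) A"
  proof -
    have [measurable]: "(\<lambda>z. z + \<mu>) -` A \<in> sets borel"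
      using measurable_sets[OF _ A, of "\<lambda>z. z + \<mu>" borel] by simp
    show ?thesis
      by (subst emeasure_distr, simp, simp, subst emeasure_density, simp, simp)
         (auto intro!: nn_integral_cong split: split_indicator)
  qed
  finally show "emeasure (density lborel (\<lambda>x. ennreal (g (x - \<mu>)))) A = emeasure (distr (density lborel (\<lambda>x. ennreal (g x))) borel (\<lambda>z. z + \<mu>)) A" .
qed

lemma sets_gauss[simp, measurable_cong]: "sets (gauss \<mu>) = sets borel"
  by (simp add: gauss_def)

lemma space_gauss[simp]: "space (gauss \<mu>) = UNIV"
  by (simp add: gauss_def)

lemma gauss_density_shift: "gauss_density \<mu> x = gauss_density 0 (x - \<mu>)"
  by (simp add: gauss_density_def)

lemma gauss_density_meas[measurable]: "gauss_density \<mu> \<in> borel_measurable borel"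
  unfolding gauss_density_def[abs_def] by measurable

lemma gauss_shift: "gauss \<mu> = distr (gauss 0) borel (\<lambda>z. z + \<mu>)"
  unfolding gauss_def
  by (subst gauss_density_shift) (rule density_shift, measurable)

lemma normal_shift: "density lborel (normal_density \<mu> 1) = distr (density lborel (normal_density 0 1)) borel (\<lambda>z. z + \<mu>)"
proof -
  have "normal_density \<mu> 1 = (\<lambda>x. normal_density 0 1 (x - \<mu>))"
    by (auto simp: normal_density_def)
  then show ?thesis by (simp add: density_shift)
qed

lemma PiM_density_nn:
  fixes \<phi> :: "'x \<Rightarrow> ennreal" and M :: "'x measure" and I :: "'i set"
  assumes sfM: "sigma_finite_measure M" and sfD: "sigma_finite_measure (density M \<phi>)"
    and [measurable]: "\<phi> \<in> borel_measurable M"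
    and fin: "finite I"
  shows "F \<in> borel_measurable (PiM I (\<lambda>_. M)) \<Longrightarrow>
    (\<integral>\<^sup>+x. F x \<partial>PiM I (\<lambda>_. density M \<phi>)) = (\<integral>\<^sup>+x. (\<Prod>i\<in>I. \<phi> (x i)) * F x \<partial>PiM I (\<lambda>_. M))"
  using fin
proof (induction I arbitrary: F rule: finite_induct)
  case empty
  interpret M: product_sigma_finite "\<lambda>_. M" unfolding product_sigma_finite_def using sfM by simp
  interpret D: product_sigma_finite "\<lambda>_. density M \<phi>" unfolding product_sigma_finite_def using sfD by simp
  show ?case by (simp add: M.nn_integral_empty D.nn_integral_empty)
next
  case (insert i I)
  interpret M: product_sigma_finite "\<lambda>_. M" unfolding product_sigma_finite_def using sfM by simp
  interpret D: product_sigma_finite "\<lambda>_. density M \<phi>" unfolding product_sigma_finite_def using sfD by simp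
  interpret sM: sigma_finite_measure M by (rule sfM)
  have Fm[measurable]: "F \<in> borel_measurable (PiM (insert i I) (\<lambda>_. M))" by fact
  have setsD: "sets (PiM J (\<lambda>_. density M \<phi>)) = sets (PiM J (\<lambda>_. M))" for J
    by (intro sets_PiM_cong) auto
  have FmD: "F \<in> borel_measurable (PiM (insert i I) (\<lambda>_. density M \<phi>))"
    using Fm by (simp add: measurable_cong_sets[OF setsD refl])
  have "(\<integral>\<^sup>+x. F x \<partial>PiM (insert i I) (\<lambda>_. density M \<phi>))
      = (\<integral>\<^sup>+x. (\<integral>\<^sup>+y. F (x(i := y)) \<partial>density M \<phi>) \<partial>PiM I (\<lambda>_. density M \<phi>))"
    by (rule D.product_nn_integral_insert[OF insert(1,2) FmD])
  also have "\<dots> = (\<integral>\<^sup>+x. (\<integral>\<^sup>+y. \<phi> y * F (x(i := y)) \<partial>M) \<partial>PiM I (\<lambda>_. density M \<phi>))"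
    by (intro nn_integral_cong, subst nn_integral_density) (auto simp: space_PiM)
  also have "\<dots> = (\<integral>\<^sup>+x. (\<Prod>j\<in>I. \<phi> (x j)) * (\<integral>\<^sup>+y. \<phi> y * F (x(i := y)) \<partial>M) \<partial>PiM I (\<lambda>_. M))"
    by (rule insert.IH) measurable
  also have "\<dots> = (\<integral>\<^sup>+x. (\<integral>\<^sup>+y. (\<Prod>j\<in>insert i I. \<phi> ((x(i := y)) j)) * F (x(i := y)) \<partial>M) \<partial>PiM I (\<lambda>_. M))"
  proof (intro nn_integral_cong)
    fix x assume x: "x \<in> space (PiM I (\<lambda>_. M))"
    have xu[measurable]: "(\<lambda>y. x(i:=y)) \<in> M \<rightarrow>\<^sub>M PiM (insert i I) (\<lambda>_. M)"
      using measurable_compose[OF measurable_Pair1'[OF x] measurable_add_dim] by simp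
    have "(\<Prod>j\<in>insert i I. \<phi> ((x(i := y)) j)) = \<phi> y * (\<Prod>j\<in>I. \<phi> (x j))" for y
    proof -
      have "(\<Prod>j\<in>I. \<phi> ((x(i := y)) j)) = (\<Prod>j\<in>I. \<phi> (x j))"
        using insert(2) by (intro prod.cong) auto
      then show ?thesis using insert(1,2) by simp
    qed
    then show "(\<Prod>j\<in>I. \<phi> (x j)) * (\<integral>\<^sup>+y. \<phi> y * F (x(i := y)) \<partial>M) = (\<integral>\<^sup>+y. (\<Prod>j\<in>insert i I. \<phi> ((x(i := y)) j)) * F (x(i := y)) \<partial>M)"
      by (subst nn_integral_cmult[symmetric]) (measurable, simp add: mult.assoc mult.left_commute)
  qed
  also have "\<dots> = (\<integral>\<^sup>+x. (\<Prod>j\<in>insert i I. \<phi> (x j)) * F x \<partial>PiM (insert i I) (\<lambda>_. M))"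
    by (rule M.product_nn_integral_insert[symmetric, OF insert(1,2)]) measurable
  finally show ?case .
qed

definition Emb :: "('a::euclidean_space \<Rightarrow> real) \<Rightarrow> 'a" where
  "Emb x = (\<Sum>b\<in>Basis. x b *\<^sub>R b)"

lemma Emb_meas[measurable]: "Emb \<in> borel_measurable (PiM Basis (\<lambda>_. M))"
  if "sets M = sets borel" for M :: "real measure"
  unfolding Emb_def
proof -
  have "(\<lambda>x. x b) \<in> borel_measurable (PiM Basis (\<lambda>_. M))" if "b \<in> Basis" for b :: 'a
    using measurable_component_singleton[OF that, of "\<lambda>_. M"] measurable_cong_sets[OF refl \<open>sets M = sets borel\<close>]
    by auto
  then show "(\<lambda>x. \<Sum>b\<in>(Basis::'a set). x b *\<^sub>R b) \<in> borel_measurable (PiM Basis (\<lambda>_. M))"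
    by (intro borel_measurable_sum borel_measurable_scaleR) auto
qed

lemma inner_Emb[simp]: "b \<in> Basis \<Longrightarrow> inner (Emb x) b = x b"
  by (simp add: Emb_def inner_sum_left_Basis)

lemma inner_Emb2[simp]: "b \<in> Basis \<Longrightarrow> inner b (Emb x) = x b"
  using inner_Emb[of b x] by (simp add: inner_commute)

lemma norm_Emb: "(norm (Emb x))\<^sup>2 = (\<Sum>b\<in>Basis. (x b)\<^sup>2)"
proof -
  have "(norm (Emb x))\<^sup>2 = inner (Emb x) (Emb x)" by (simp add: power2_norm_eq_inner)
  also have "\<dots> = (\<Sum>b\<in>Basis. (inner (Emb x) b) * (inner (Emb x) b))" by (rule euclidean_inner)
  also have "\<dots> = (\<Sum>b\<in>Basis. (x b)\<^sup>2)" by (simp add: power2_eq_square)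
  finally show ?thesis .
qed

lemma gauss_density_Emb:
  "gauss_density (0::'a::euclidean_space) (Emb x) = (\<Prod>b\<in>Basis. normal_density 0 1 (x b))"
proof -
  have pw: "(2 * pi) powr - (real DIM('a) / 2) = (1 / sqrt (2 * pi)) ^ DIM('a)"
  proof -
    have "(2 * pi) powr (real DIM('a) / 2) = ((2 * pi) powr (1/2)) powr real DIM('a)"
      by (simp add: powr_powr)
    also have "\<dots> = sqrt (2 * pi) ^ DIM('a)"
      by (simp add: powr_half_sqrt powr_realpow)
    finally show ?thesis
      by (simp add: powr_minus_divide power_one_over)
  qed
  have "(\<Prod>b\<in>(Basis::'a set). normal_density 0 1 (x b)) = (\<Prod>b\<in>(Basis::'a set). (1 / sqrt (2 * pi)) * exp (- (x b)\<^sup>2 / 2))"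
    by (simp add: std_normal_density_def)
  also have "\<dots> = (1 / sqrt (2 * pi)) ^ DIM('a) * exp (\<Sum>b\<in>(Basis::'a set). - (x b)\<^sup>2 / 2)"
    by (simp only: prod.distrib prod_constant) (simp add: exp_sum)
  also have "(\<Sum>b\<in>(Basis::'a set). - (x b)\<^sup>2 / 2) = - (norm (Emb x))\<^sup>2 / 2"
    by (simp add: norm_Emb sum_negf sum_divide_distrib)
  finally show ?thesis
    by (simp add: gauss_density_def pw)
qed

lemma sf_std: "sigma_finite_measure std_normal_distribution"
  by (simp add: prob_space_imp_sigma_finite prob_space_normal_density)

lemma gauss0_eq: "gauss (0::'a::euclidean_space) = distr (PiM Basis (\<lambda>_. std_normal_distribution)) borel Emb"
proof (rule measure_eqI)
  show "sets (gauss (0::'a)) = sets (distr (PiM Basis (\<lambda>_. std_normal_distribution)) borel Emb)" by simp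
next
  fix A assume "A \<in> sets (gauss (0::'a))"
  then have A[measurable]: "A \<in> sets borel" by simp
  have "emeasure (gauss (0::'a)) A = (\<integral>\<^sup>+z. ennreal (gauss_density 0 z) * indicator A z \<partial>lborel)"
    by (simp add: gauss_def emeasure_density)
  also have "\<dots> = (\<integral>\<^sup>+z. ennreal (gauss_density 0 z) * indicator A z \<partial>distr (PiM Basis (\<lambda>_. lborel)) borel Emb)"
    by (simp add: lborel_eq[where 'a='a] Emb_def[abs_def])
  also have "\<dots> = (\<integral>\<^sup>+x. ennreal (gauss_density 0 (Emb x)) * indicator A (Emb x) \<partial>PiM Basis (\<lambda>_. lborel))"
    by (subst nn_integral_distr) (auto intro: Emb_meas)
  also have "\<dots> = (\<integral>\<^sup>+x. (\<Prod>b\<in>(Basis::'a set). ennreal (normal_density 0 1 (x b))) * indicator A (Emb x) \<partial>PiM Basis (\<lambda>_. lborel))"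
    by (simp add: gauss_density_Emb prod_ennreal)
  also have "\<dots> = (\<integral>\<^sup>+x. indicator A (Emb x) \<partial>PiM Basis (\<lambda>_. std_normal_distribution))"
    by (rule PiM_density_nn[symmetric]) (auto intro: sf_std sigma_finite_lborel measurable_compose[OF Emb_meas] simp: sigma_finite_lborel)
  also have "\<dots> = emeasure (distr (PiM Basis (\<lambda>_. std_normal_distribution)) borel Emb) A"
  proof -
    have m: "Emb \<in> PiM Basis (\<lambda>_. std_normal_distribution) \<rightarrow>\<^sub>M borel" by (rule Emb_meas) simp
    have "emeasure (PiM Basis (\<lambda>_. std_normal_distribution)) (Emb -` A \<inter> space (PiM Basis (\<lambda>_. std_normal_distribution)))
       = (\<integral>\<^sup>+x. indicator (Emb -` A \<inter> space (PiM Basis (\<lambda>_. std_normal_distribution))) x \<partial>PiM Basis (\<lambda>_. std_normal_distribution))"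
      by (rule nn_integral_indicator[symmetric]) (rule measurable_sets[OF m A])
    also have "\<dots> = (\<integral>\<^sup>+x. indicator A (Emb x) \<partial>PiM Basis (\<lambda>_. std_normal_distribution))"
      by (intro nn_integral_cong) (auto split: split_indicator)
    finally show ?thesis
      by (subst emeasure_distr[OF m A]) simp
  qed
  finally show "emeasure (gauss (0::'a)) A = emeasure (distr (PiM Basis (\<lambda>_. std_normal_distribution)) borel Emb) A" .
qed

lemma prob_space_gauss0: "prob_space (gauss (0::'a::euclidean_space))"
proof -
  interpret P: prob_space "PiM (Basis::'a set) (\<lambda>_. std_normal_distribution)"
    by (rule prob_space_PiM) (simp add: prob_space_normal_density)
  show ?thesis unfolding gauss0_eq by (rule P.prob_space_distr) (rule Emb_meas, simp)
qed

lemma prob_N[simp]: "prob_space std_normal_distribution"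
  by (simp add: prob_space_normal_density)

lemma Emb_upd:
  fixes u :: "'a::euclidean_space"
  assumes u: "u \<in> Basis"
  shows "Emb (x(u := y)) = y *\<^sub>R u + (\<Sum>b\<in>Basis - {u}. x b *\<^sub>R b)"
proof -
  have h1: "Emb (x(u := y)) = (x(u := y)) u *\<^sub>R u + (\<Sum>b\<in>Basis - {u}. (x(u := y)) b *\<^sub>R b)"
    unfolding Emb_def by (rule sum.remove[OF finite_Basis u])
  have h2: "(\<Sum>b\<in>Basis - {u}. (x(u := y)) b *\<^sub>R b) = (\<Sum>b\<in>Basis - {u}. x b *\<^sub>R b)"
    by (intro sum.cong) auto
  show ?thesis using h1 h2 by (metis fun_upd_same)
qed

lemma inner_rest:
  fixes u :: "'a::euclidean_space"
  assumes u: "u \<in> Basis"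
  shows "inner u (\<Sum>b\<in>Basis - {u}. x b *\<^sub>R b) = 0"
  unfolding inner_sum_right by (rule sum.neutral) (use u in \<open>auto simp: inner_Basis\<close>)

lemma gauss_split:
  fixes u :: "'a::euclidean_space" and \<Theta> :: "'a \<Rightarrow> ennreal"
  assumes u: "u \<in> Basis" and [measurable]: "\<Theta> \<in> borel_measurable borel"
  shows "(\<integral>\<^sup>+z. \<Theta> z \<partial>gauss 0) = (\<integral>\<^sup>+y. (\<integral>\<^sup>+x. \<Theta> (Emb (x(u := y))) \<partial>PiM (Basis - {u}) (\<lambda>_. std_normal_distribution)) \<partial>std_normal_distribution)"
proof -
  interpret PN: product_sigma_finite "\<lambda>_::'a. std_normal_distribution"
    unfolding product_sigma_finite_def by (simp add: sf_std)
  have m: "Emb \<in> PiM (Basis::'a set) (\<lambda>_. std_normal_distribution) \<rightarrow>\<^sub>M borel" by (rule Emb_meas) simp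
  have m2: "(\<lambda>x. \<Theta> (Emb x)) \<in> borel_measurable (PiM (insert u (Basis - {u})) (\<lambda>_. std_normal_distribution))"
    using u m by (simp add: insert_absorb)
  have "(\<integral>\<^sup>+z. \<Theta> z \<partial>gauss 0) = (\<integral>\<^sup>+x. \<Theta> (Emb x) \<partial>PiM Basis (\<lambda>_. std_normal_distribution))"
    by (simp add: gauss0_eq nn_integral_distr[OF m])
  also have "\<dots> = (\<integral>\<^sup>+x. \<Theta> (Emb x) \<partial>PiM (insert u (Basis - {u})) (\<lambda>_. std_normal_distribution))"
    using u by (simp add: insert_absorb)
  also have "\<dots> = (\<integral>\<^sup>+y. (\<integral>\<^sup>+x. \<Theta> (Emb (x(u := y))) \<partial>PiM (Basis - {u}) (\<lambda>_. std_normal_distribution)) \<partial>std_normal_distribution)"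
    by (rule PN.product_nn_integral_insert_rev[OF _ _ m2]) auto
  finally show ?thesis .
qed

lemma single_identity:
  fixes u :: "'a::euclidean_space" and \<psi> :: "'a \<Rightarrow> ennreal"
  assumes u: "u \<in> Basis" and [measurable]: "\<psi> \<in> borel_measurable borel"
  shows "(\<integral>\<^sup>+s. (\<integral>\<^sup>+z. \<psi> (s *\<^sub>R u + (z - inner u z *\<^sub>R u)) \<partial>gauss 0) \<partial>std_normal_distribution) = (\<integral>\<^sup>+z. \<psi> z \<partial>gauss 0)"
proof -
  interpret N: prob_space std_normal_distribution by simp
  have sp: "emeasure std_normal_distribution UNIV = 1" using N.emeasure_space_1 by simp
  have key: "s *\<^sub>R u + (Emb (x(u := y)) - inner u (Emb (x(u := y))) *\<^sub>R u) = Emb (x(u := s))" for s y x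
    using u by (simp add: Emb_upd inner_rest inner_add_right)
  have "(\<integral>\<^sup>+z. \<psi> (s *\<^sub>R u + (z - inner u z *\<^sub>R u)) \<partial>gauss 0)
     = (\<integral>\<^sup>+x. \<psi> (Emb (x(u := s))) \<partial>PiM (Basis - {u}) (\<lambda>_. std_normal_distribution))" for s
    by (subst gauss_split[OF u]) (measurable, simp add: key sp)
  then show ?thesis
    by (simp add: gauss_split[OF u])
qed

lemma sets_N[measurable_cong]: "sets std_normal_distribution = sets borel" by simp

lemma sf_gauss0: "sigma_finite_measure (gauss (0::'a::euclidean_space))"
  by (rule prob_space_imp_sigma_finite) (rule prob_space_gauss0)

lemma key_identity:
  fixes u :: "'a::euclidean_space" and I :: "'i set"
  assumes u: "u \<in> Basis" and fin: "finite I"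
  shows "\<Psi> \<in> borel_measurable (PiM I (\<lambda>_. gauss 0)) \<Longrightarrow>
    (\<integral>\<^sup>+S. (\<integral>\<^sup>+Z. \<Psi> (\<lambda>i\<in>I. S i *\<^sub>R u + (Z i - inner u (Z i) *\<^sub>R u)) \<partial>PiM I (\<lambda>_. gauss 0)) \<partial>PiM I (\<lambda>_. std_normal_distribution))
     = (\<integral>\<^sup>+Z. \<Psi> Z \<partial>PiM I (\<lambda>_. gauss 0))"
  using fin
proof (induction I arbitrary: \<Psi> rule: finite_induct)
  case empty
  interpret PN: product_sigma_finite "\<lambda>_::'i. std_normal_distribution"
    unfolding product_sigma_finite_def by (simp add: sf_std)
  interpret PG: product_sigma_finite "\<lambda>_::'i. gauss (0::'a)"
    unfolding product_sigma_finite_def by (simp add: sf_gauss0)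
  show ?case by (simp add: PN.nn_integral_empty PG.nn_integral_empty PiM_empty nn_integral_count_space_finite)
next
  case (insert i I)
  interpret PN: product_sigma_finite "\<lambda>_::'i. std_normal_distribution"
    unfolding product_sigma_finite_def by (simp add: sf_std)
  interpret PG: product_sigma_finite "\<lambda>_::'i. gauss (0::'a)"
    unfolding product_sigma_finite_def by (simp add: sf_gauss0)
  interpret G: sigma_finite_measure "gauss (0::'a)" by (rule sf_gauss0)
  interpret N: sigma_finite_measure "std_normal_distribution" by (rule sf_std)
  interpret PGI: sigma_finite_measure "PiM I (\<lambda>_. gauss (0::'a))"
    by (rule prob_space_imp_sigma_finite, rule prob_space_PiM, rule prob_space_gauss0)
  interpret PGI2: sigma_finite_measure "PiM (insert i I) (\<lambda>_. gauss (0::'a))"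
    by (rule prob_space_imp_sigma_finite, rule prob_space_PiM, rule prob_space_gauss0)
  interpret pair: pair_sigma_finite "PiM I (\<lambda>_. gauss (0::'a))" std_normal_distribution ..
  define h where "h = (\<lambda>(s::real) (z::'a). s *\<^sub>R u + (z - inner u z *\<^sub>R u))"
  have hm[measurable]: "(\<lambda>(s, z). h s z) \<in> borel_measurable (borel \<Otimes>\<^sub>M borel)"
    unfolding h_def by measurable
  have [measurable]: "\<Psi> \<in> borel_measurable (PiM (insert i I) (\<lambda>_. gauss 0))" by fact
  let ?W = "\<lambda>J S Z. (\<lambda>j\<in>J. h (S j) (Z j))"
  have eqW: "?W (insert i I) (S(i := s)) (Z(i := z)) = (?W I S Z)(i := h s z)" for S Z s z
    using insert(2) by (auto simp: fun_eq_iff)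
  have lhs_eq: "(\<integral>\<^sup>+S. (\<integral>\<^sup>+Z. \<Psi> (\<lambda>j\<in>insert i I. S j *\<^sub>R u + (Z j - inner u (Z j) *\<^sub>R u)) \<partial>PiM (insert i I) (\<lambda>_. gauss 0)) \<partial>PiM (insert i I) (\<lambda>_. std_normal_distribution))
     = (\<integral>\<^sup>+S. (\<integral>\<^sup>+Z. \<Psi> (?W (insert i I) S Z) \<partial>PiM (insert i I) (\<lambda>_. gauss 0)) \<partial>PiM (insert i I) (\<lambda>_. std_normal_distribution))"
    by (simp add: h_def)
  also have "\<dots> = (\<integral>\<^sup>+S. (\<integral>\<^sup>+s. (\<integral>\<^sup>+Z. \<Psi> (?W (insert i I) (S(i := s)) Z) \<partial>PiM (insert i I) (\<lambda>_. gauss 0)) \<partial>std_normal_distribution) \<partial>PiM I (\<lambda>_. std_normal_distribution))"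
    by (rule PN.product_nn_integral_insert[OF insert(1,2)]) measurable
  also have "\<dots> = (\<integral>\<^sup>+S. (\<integral>\<^sup>+s. (\<integral>\<^sup>+Z. (\<integral>\<^sup>+z. \<Psi> ((?W I S Z)(i := h s z)) \<partial>gauss 0) \<partial>PiM I (\<lambda>_. gauss 0)) \<partial>std_normal_distribution) \<partial>PiM I (\<lambda>_. std_normal_distribution))"
    apply (intro nn_integral_cong)
    apply (subst PG.product_nn_integral_insert[OF insert(1,2)])
    apply measurable
    apply (simp only: eqW)
    done
  also have "\<dots> = (\<integral>\<^sup>+S. (\<integral>\<^sup>+Z. (\<integral>\<^sup>+s. (\<integral>\<^sup>+z. \<Psi> ((?W I S Z)(i := h s z)) \<partial>gauss 0) \<partial>std_normal_distribution) \<partial>PiM I (\<lambda>_. gauss 0)) \<partial>PiM I (\<lambda>_. std_normal_distribution))"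
    apply (intro nn_integral_cong)
    apply (rule pair.Fubini')
    apply measurable
    done
  also have "\<dots> = (\<integral>\<^sup>+S. (\<integral>\<^sup>+Z. (\<integral>\<^sup>+z. \<Psi> ((?W I S Z)(i := z)) \<partial>gauss 0) \<partial>PiM I (\<lambda>_. gauss 0)) \<partial>PiM I (\<lambda>_. std_normal_distribution))"
  proof (intro nn_integral_cong)
    fix S Z
    have V: "?W I S Z \<in> space (PiM I (\<lambda>_. gauss (0::'a)))" by (simp add: space_PiM)
    have [measurable]: "(\<lambda>w. \<Psi> ((?W I S Z)(i := w))) \<in> borel_measurable borel"
      using measurable_compose[OF measurable_Pair1'[OF V] measurable_add_dim, of i] 
      by (simp add: measurable_cong_sets[OF refl sets_gauss])
    show "(\<integral>\<^sup>+s. (\<integral>\<^sup>+z. \<Psi> ((?W I S Z)(i := h s z)) \<partial>gauss 0) \<partial>std_normal_distribution) = (\<integral>\<^sup>+z. \<Psi> ((?W I S Z)(i := z)) \<partial>gauss 0)"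
      unfolding h_def by (rule single_identity[OF u]) measurable
  qed
  also have "\<dots> = (\<integral>\<^sup>+V. (\<integral>\<^sup>+z. \<Psi> (V(i := z)) \<partial>gauss 0) \<partial>PiM I (\<lambda>_. gauss 0))"
    unfolding h_def by (rule insert.IH) measurable
  also have "\<dots> = (\<integral>\<^sup>+Z. \<Psi> Z \<partial>PiM (insert i I) (\<lambda>_. gauss 0))"
    by (rule PG.product_nn_integral_insert[OF insert(1,2), symmetric]) measurable
  finally show ?case .
qed

lemma jensen_sq:
  fixes h :: "'x \<Rightarrow> real"
  assumes P: "prob_space M" and hm[measurable]: "h \<in> borel_measurable M"
    and fin: "(\<integral>\<^sup>+x. ennreal ((h x - c)\<^sup>2) \<partial>M) \<noteq> \<infinity>"
  shows "integrable M h" and "ennreal ((integral\<^sup>L M h - c)\<^sup>2) \<le> (\<integral>\<^sup>+x. ennreal ((h x - c)\<^sup>2) \<partial>M)"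
proof -
  interpret prob_space M by (rule P)
  have isq: "integrable M (\<lambda>x. (h x - c)\<^sup>2)"
    by (rule integrableI_bounded) (use fin in \<open>auto simp: top.not_eq_extremum\<close>)
  have i1: "integrable M (\<lambda>x. h x - c)"
  proof (rule Bochner_Integration.integrable_bound[of M "\<lambda>x. 1 + (h x - c)\<^sup>2"])
    show "integrable M (\<lambda>x. 1 + (h x - c)\<^sup>2)" using isq by simp
    show "AE x in M. norm (h x - c) \<le> norm (1 + (h x - c)\<^sup>2)"
    proof (rule AE_I2)
      fix x
      have "\<bar>t\<bar> \<le> 1 + t\<^sup>2" for t :: real
      proof (cases "\<bar>t\<bar> \<le> 1")
        case True then show ?thesis by (smt (verit) zero_le_power2)
      next
        case False
        then have "\<bar>t\<bar> * 1 \<le> \<bar>t\<bar> * \<bar>t\<bar>" by (intro mult_left_mono) auto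
        then show ?thesis by (simp add: power2_eq_square abs_mult_self_eq)
      qed
      then show "norm (h x - c) \<le> norm (1 + (h x - c)\<^sup>2)" by simp
    qed
  qed measurable
  then have ih: "integrable M h"
    using Bochner_Integration.integrable_add[OF i1 integrable_const[of c]] by simp
  then show "integrable M h" .
  define m where "m = integral\<^sup>L M h"
  have eq: "(\<lambda>x. (h x - c)\<^sup>2) = (\<lambda>x. (h x - m)\<^sup>2 + 2 * (m - c) * (h x - m) + (m - c)\<^sup>2)"
    by (auto simp: fun_eq_iff power2_eq_square algebra_simps)
  have im: "integrable M (\<lambda>x. (h x - m)\<^sup>2)"
  proof -
    have "(\<lambda>x. (h x - m)\<^sup>2) = (\<lambda>x. (h x - c)\<^sup>2 - 2 * (m - c) * (h x - c) + (m - c)\<^sup>2)"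
      by (auto simp: fun_eq_iff power2_eq_square algebra_simps)
    then show ?thesis using isq i1 by simp
  qed
  have im1: "integrable M (\<lambda>x. h x - m)" using ih by simp
  have "integral\<^sup>L M (\<lambda>x. (h x - c)\<^sup>2) = integral\<^sup>L M (\<lambda>x. (h x - m)\<^sup>2) + 2 * (m - c) * integral\<^sup>L M (\<lambda>x. h x - m) + (m - c)\<^sup>2"
    by (subst eq, subst Bochner_Integration.integral_add, use im im1 in simp, simp)
       (subst Bochner_Integration.integral_add, use im im1 in \<open>simp_all add: prob_space\<close>)
  also have "integral\<^sup>L M (\<lambda>x. h x - m) = 0"
    using ih by (simp add: m_def prob_space)
  finally have "integral\<^sup>L M (\<lambda>x. (h x - c)\<^sup>2) = integral\<^sup>L M (\<lambda>x. (h x - m)\<^sup>2) + (m - c)\<^sup>2" by simp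
  moreover have "0 \<le> integral\<^sup>L M (\<lambda>x. (h x - m)\<^sup>2)" by simp
  ultimately have le: "(m - c)\<^sup>2 \<le> integral\<^sup>L M (\<lambda>x. (h x - c)\<^sup>2)" by simp
  have "(\<integral>\<^sup>+x. ennreal ((h x - c)\<^sup>2) \<partial>M) = ennreal (integral\<^sup>L M (\<lambda>x. (h x - c)\<^sup>2))"
    by (rule nn_integral_eq_integral[OF isq]) simp
  then show "ennreal ((integral\<^sup>L M h - c)\<^sup>2) \<le> (\<integral>\<^sup>+x. ennreal ((h x - c)\<^sup>2) \<partial>M)"
    using le by (simp add: m_def ennreal_leI)
qed

lemma jensen_sq2:
  fixes h :: "'x \<Rightarrow> real"
  assumes P: "prob_space M" and hm[measurable]: "h \<in> borel_measurable M"
  shows "ennreal ((integral\<^sup>L M h - c)\<^sup>2) \<le> (\<integral>\<^sup>+x. ennreal ((h x - c)\<^sup>2) \<partial>M)"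
  using jensen_sq(2)[OF P hm] by (cases "(\<integral>\<^sup>+x. ennreal ((h x - c)\<^sup>2) \<partial>M) = \<infinity>") auto

lemma samples_shift_nn:
  fixes M :: "'b::euclidean_space measure" and \<mu> :: 'b
  assumes P: "prob_space M" and sM: "sets M = sets borel"
    and F: "F \<in> borel_measurable (PiM {..<n} (\<lambda>_. borel))"
  shows "(\<integral>\<^sup>+X. F X \<partial>samples n (distr M borel (\<lambda>z. z + \<mu>))) = (\<integral>\<^sup>+Z. F (\<lambda>i\<in>{..<n}. Z i + \<mu>) \<partial>PiM {..<n} (\<lambda>_. M))"
proof -
  interpret prob_space M by (rule P)
  have fm[measurable]: "(\<lambda>z. z + \<mu>) \<in> M \<rightarrow>\<^sub>M borel"
    by (subst measurable_cong_sets[OF sM refl]) simp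
  have pd: "prob_space (distr M borel (\<lambda>z. z + \<mu>))" by (rule prob_space_distr) simp
  have fm2: "(\<lambda>z. z + \<mu>) \<in> M \<rightarrow>\<^sub>M distr M borel (\<lambda>z. z + \<mu>)"
    by (subst measurable_cong_sets[OF sM, where N'=borel]) simp_all
  have dd: "distr M (distr M borel (\<lambda>z. z + \<mu>)) (\<lambda>z. z + \<mu>) = distr M borel (\<lambda>z. z + \<mu>)"
    by (rule distr_cong) auto
  have eq: "samples n (distr M borel (\<lambda>z. z + \<mu>)) = distr (PiM {..<n} (\<lambda>_. M)) (PiM {..<n} (\<lambda>_. distr M borel (\<lambda>z. z + \<mu>))) (compose {..<n} (\<lambda>z. z + \<mu>))"
    unfolding samples_def
    by (subst distr_PiM_finite_prob_space'[OF _ P pd fm2]) (auto simp: dd)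
  have cm: "compose {..<n} (\<lambda>z. z + \<mu>) \<in> PiM {..<n} (\<lambda>_. M) \<rightarrow>\<^sub>M PiM {..<n} (\<lambda>_. distr M borel (\<lambda>z. z + \<mu>))"
    unfolding compose_def using fm2 by measurable
  have sets_eq: "sets (PiM {..<n} (\<lambda>_. distr M borel (\<lambda>z. z + \<mu>))) = sets (PiM {..<n} (\<lambda>_. borel))"
    by (intro sets_PiM_cong) auto
  have Fm: "F \<in> borel_measurable (PiM {..<n} (\<lambda>_. distr M borel (\<lambda>z. z + \<mu>)))"
    using F measurable_cong_sets[OF sets_eq refl] by simp
  show ?thesis
  proof -
    have Fm': "F \<in> borel_measurable (distr (PiM {..<n} (\<lambda>_. M)) (PiM {..<n} (\<lambda>_. distr M borel (\<lambda>z. z + \<mu>))) (compose {..<n} (\<lambda>z. z + \<mu>)))"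
      using Fm by simp
    show ?thesis
      unfolding eq by (subst nn_integral_distr[OF cm Fm']) (simp add: compose_def)
  qed
qed

lemma gauss_samples_nn:
  fixes \<mu> :: "'a::euclidean_space"
  assumes F: "F \<in> borel_measurable (PiM {..<n} (\<lambda>_. borel))"
  shows "(\<integral>\<^sup>+X. F X \<partial>samples n (gauss \<mu>)) = (\<integral>\<^sup>+Z. F (\<lambda>i\<in>{..<n}. Z i + \<mu>) \<partial>PiM {..<n} (\<lambda>_. gauss 0))"
  unfolding gauss_shift[of \<mu>] by (rule samples_shift_nn[OF prob_space_gauss0 _ F]) simp

lemma normal_samples_nn:
  assumes F: "F \<in> borel_measurable (PiM {..<n} (\<lambda>_. borel))"
  shows "(\<integral>\<^sup>+X. F X \<partial>samples n (density lborel (normal_density \<mu> 1))) = (\<integral>\<^sup>+Z. F (\<lambda>i\<in>{..<n}. Z i + \<mu>) \<partial>PiM {..<n} (\<lambda>_. std_normal_distribution))"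
  unfolding normal_shift[of \<mu>] by (rule samples_shift_nn[OF _ _ F]) simp_all

lemma sets_dens_real[measurable_cong]: "sets (density (lborel::real measure) g) = sets borel" by simp

lemma norm_sq_Basis: "(norm (x::'a::euclidean_space))\<^sup>2 = (\<Sum>b\<in>Basis. (inner x b)\<^sup>2)"
proof -
  have "(norm x)\<^sup>2 = inner x x" by (simp add: power2_norm_eq_inner)
  also have "\<dots> = (\<Sum>b\<in>Basis. (inner x b) * (inner x b))" by (rule euclidean_inner)
  finally show ?thesis by (simp add: power2_eq_square)
qed

theorem lemmaE2:
  fixes f :: "(nat \<Rightarrow> 'a::euclidean_space) \<Rightarrow> 'a"
    and n :: nat and C \<rho> :: real
  assumes "n > 0"
    and "f \<in> borel_measurable (samples n (borel :: 'a measure))"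
    and "unif_MSE_accurate f n C"
    and "\<rho> > 0"
  shows "\<exists>u lam. norm u = 1 \<and> inner u lam = 0 \<and>
    (AE \<mu>' in density lborel (normal_density 0 \<rho>).
       AE T in samples n (density lborel (normal_density \<mu>' 1)).
         integrable (samples n (gauss 0)) (g_integrand f n u lam T)) \<and>
    (\<integral>\<^sup>+ \<mu>'. (\<integral>\<^sup>+ T. ennreal ((g_est f n u lam T - \<mu>')\<^sup>2)
        \<partial>samples n (density lborel (normal_density \<mu>' 1)))
      \<partial>density lborel (normal_density 0 \<rho>)) \<le> ennreal (C / real n)"
proof -
  let ?G = "gauss (0::'a)"
  let ?GN = "PiM {..<n} (\<lambda>_. gauss (0::'a))"
  define Nr where "Nr = density lborel (normal_density 0 \<rho>)"
  have fB[measurable]: "f \<in> borel_measurable (PiM {..<n} (\<lambda>_. borel))"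
    using assms(2) by (simp add: samples_def)
  interpret GN: prob_space ?GN by (rule prob_space_PiM) (rule prob_space_gauss0)
  have prNr: "prob_space Nr" using assms(4) by (simp add: Nr_def prob_space_normal_density)
  interpret Nr: prob_space Nr by (rule prNr)
  have sNr[measurable_cong]: "sets Nr = sets borel" by (simp add: Nr_def)
  let ?Pr = "PiM (Basis::'a set) (\<lambda>_. Nr)"
  interpret Pr: prob_space ?Pr by (rule prob_space_PiM) (rule prNr)
  have EmbPr[measurable]: "Emb \<in> borel_measurable ?Pr" by (rule Emb_meas) (simp add: Nr_def)
  have Rle: "(\<integral>\<^sup>+X. ennreal ((norm (f X - \<mu>))\<^sup>2) \<partial>samples n (gauss \<mu>)) \<le> ennreal (C * real DIM('a) / real n)" for \<mu>
    using assms(3) unfolding unif_MSE_accurate_def by (simp add: SUP_le_iff)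
  define Rb where "Rb b m = (\<integral>\<^sup>+Z. ennreal ((inner b (f (\<lambda>i\<in>{..<n}. Z i + Emb m)) - m b)\<^sup>2) \<partial>?GN)" for b m
  have Rbm[measurable]: "Rb b \<in> borel_measurable ?Pr" if b: "b \<in> Basis" for b
  proof -
    have [measurable]: "(\<lambda>m. m b) \<in> borel_measurable ?Pr"
      using measurable_component_singleton[OF b, of "\<lambda>_. Nr"] unfolding measurable_cong_sets[OF refl sNr] .
    show ?thesis unfolding Rb_def by measurable
  qed
  have decomp: "(\<integral>\<^sup>+X. ennreal ((norm (f X - Emb m))\<^sup>2) \<partial>samples n (gauss (Emb m))) = (\<Sum>b\<in>Basis. Rb b m)" for m
  proof -
    have "(\<integral>\<^sup>+X. ennreal ((norm (f X - Emb m))\<^sup>2) \<partial>samples n (gauss (Emb m)))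
        = (\<integral>\<^sup>+Z. ennreal ((norm (f (\<lambda>i\<in>{..<n}. Z i + Emb m) - Emb m))\<^sup>2) \<partial>?GN)"
      by (rule gauss_samples_nn) measurable
    also have "\<dots> = (\<integral>\<^sup>+Z. (\<Sum>b\<in>Basis. ennreal ((inner b (f (\<lambda>i\<in>{..<n}. Z i + Emb m)) - m b)\<^sup>2)) \<partial>?GN)"
    proof (intro nn_integral_cong)
      fix Z
      have "(norm (f (\<lambda>i\<in>{..<n}. Z i + Emb m) - Emb m))\<^sup>2 = (\<Sum>b\<in>Basis. (inner b (f (\<lambda>i\<in>{..<n}. Z i + Emb m)) - m b)\<^sup>2)"
        unfolding norm_sq_Basis by (intro sum.cong refl) (simp add: inner_commute inner_diff_right)
      then show "ennreal ((norm (f (\<lambda>i\<in>{..<n}. Z i + Emb m) - Emb m))\<^sup>2) = (\<Sum>b\<in>Basis. ennreal ((inner b (f (\<lambda>i\<in>{..<n}. Z i + Emb m)) - m b)\<^sup>2))"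
        by (simp add: sum_ennreal)
    qed
    also have "\<dots> = (\<Sum>b\<in>Basis. Rb b m)"
      unfolding Rb_def by (rule nn_integral_sum) measurable
    finally show ?thesis .
  qed
  have "(\<Sum>b\<in>Basis. (\<integral>\<^sup>+m. Rb b m \<partial>?Pr)) = (\<integral>\<^sup>+m. (\<Sum>b\<in>Basis. Rb b m) \<partial>?Pr)"
    by (rule nn_integral_sum[symmetric]) (rule Rbm)
  also have "\<dots> \<le> (\<integral>\<^sup>+m. ennreal (C * real DIM('a) / real n) \<partial>?Pr)"
    by (intro nn_integral_mono) (simp add: decomp[symmetric] Rle)
  also have "\<dots> = ennreal (C * real DIM('a) / real n)"
    by (simp add: Pr.emeasure_space_1)
  finally have total: "(\<Sum>b\<in>Basis. (\<integral>\<^sup>+m. Rb b m \<partial>?Pr)) \<le> ennreal (C * real DIM('a) / real n)" .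
  define X where "X b = (\<integral>\<^sup>+m. Rb b m \<partial>?Pr)" for b
  have "Min (X ` Basis) \<in> X ` Basis" by (rule Min_in) auto
  then obtain u where u: "u \<in> Basis" and uX: "X u = Min (X ` Basis)" by (metis imageE)
  have uRb: "(\<integral>\<^sup>+m. Rb u m \<partial>?Pr) \<le> ennreal (C / real n)"
  proof -
    have "of_nat DIM('a) * X u = (\<Sum>b\<in>(Basis::'a set). X u)" by simp
    also have "\<dots> \<le> (\<Sum>b\<in>Basis. X b)"
      by (intro sum_mono) (auto simp: uX)
    also have "\<dots> \<le> ennreal (C * real DIM('a) / real n)" using total by (simp add: X_def)
    also have "\<dots> = of_nat DIM('a) * ennreal (C / real n)"
    proof (cases "C \<ge> 0")
      case True
      have "ennreal (C * real DIM('a) / real n) = ennreal (real DIM('a) * (C / real n))" by (simp add: mult.commute)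
      also have "\<dots> = ennreal (real DIM('a)) * ennreal (C / real n)"
        using True by (intro ennreal_mult) auto
      finally show ?thesis by (simp add: ennreal_of_nat_eq_real_of_nat)
    next
      case False
      then have "C * real DIM('a) / real n \<le> 0" "C / real n \<le> 0"
        by (auto simp: divide_nonpos_nonneg mult_nonpos_nonneg)
      then show ?thesis using ennreal_neg by simp
    qed
    finally have "of_nat DIM('a) * X u \<le> of_nat DIM('a) * ennreal (C / real n)" .
    then show ?thesis
      by (subst (asm) ennreal_mult_le_mult_iff) (auto simp: X_def)
  qed
  interpret PNr: product_sigma_finite "\<lambda>_::'a. Nr"
    unfolding product_sigma_finite_def by (simp add: prob_space_imp_sigma_finite prNr)
  have Rbu_ins: "Rb u \<in> borel_measurable (PiM (insert u (Basis - {u})) (\<lambda>_. Nr))"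
    using Rbm[OF u] u by (simp add: insert_absorb)
  define H where "H m' = (\<integral>\<^sup>+y. Rb u (m'(u := y)) \<partial>Nr)" for m'
  have Hm: "H \<in> borel_measurable (PiM (Basis - {u}) (\<lambda>_. Nr))"
    unfolding H_def using Rbu_ins by measurable
  have "(\<integral>\<^sup>+m. Rb u m \<partial>?Pr) = (\<integral>\<^sup>+m. Rb u m \<partial>PiM (insert u (Basis - {u})) (\<lambda>_. Nr))"
    using u by (simp add: insert_absorb)
  also have "\<dots> = (\<integral>\<^sup>+m'. H m' \<partial>PiM (Basis - {u}) (\<lambda>_. Nr))"
    unfolding H_def by (rule PNr.product_nn_integral_insert[OF _ _ Rbu_ins]) auto
  finally have intH: "(\<integral>\<^sup>+m'. H m' \<partial>PiM (Basis - {u}) (\<lambda>_. Nr)) \<le> ennreal (C / real n)"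
    using uRb by simp
  interpret PB: prob_space "PiM (Basis - {u}) (\<lambda>_. Nr)" by (rule prob_space_PiM) (rule prNr)
  obtain m' where m': "H m' \<le> ennreal (C / real n)"
  proof (rule ccontr)
    assume "\<not> thesis"
    with that have lt: "ennreal (C / real n) < H m'" for m' by (meson not_le)
    have "(\<integral>\<^sup>+m'. ennreal (C / real n) \<partial>PiM (Basis - {u}) (\<lambda>_. Nr)) < (\<integral>\<^sup>+m'. H m' \<partial>PiM (Basis - {u}) (\<lambda>_. Nr))"
    proof (rule nn_integral_less)
      show "(\<integral>\<^sup>+m'. ennreal (C / real n) \<partial>PiM (Basis - {u}) (\<lambda>_. Nr)) \<noteq> \<infinity>"
        by (simp add: PB.emeasure_space_1)
      show "AE x in PiM (Basis - {u}) (\<lambda>_. Nr). ennreal (C / real n) \<le> H x"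
        using lt by (auto intro: less_imp_le)
      show "\<not> (AE x in PiM (Basis - {u}) (\<lambda>_. Nr). H x \<le> ennreal (C / real n))"
      proof
        assume "AE x in PiM (Basis - {u}) (\<lambda>_. Nr). H x \<le> ennreal (C / real n)"
        then have "AE x in PiM (Basis - {u}) (\<lambda>_. Nr). False"
          by (rule eventually_mono) (use lt in \<open>auto simp: not_le[symmetric]\<close>)
        then show False using PB.AE_False by simp
      qed
    qed (use Hm in auto)
    then show False using intH by (simp add: PB.emeasure_space_1)
  qed
  define lam where "lam = (\<Sum>b\<in>Basis - {u}. m' b *\<^sub>R b)"
  have u1: "norm u = 1" using u by simp
  have ulam: "inner u lam = 0" unfolding lam_def by (rule inner_rest[OF u])
  define Bin where "Bin y = (\<integral>\<^sup>+Z. ennreal ((inner u (f (\<lambda>i\<in>{..<n}. Z i + (y *\<^sub>R u + lam))) - y)\<^sup>2) \<partial>?GN)" for y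
  have RbBin: "Rb u (m'(u := y)) = Bin y" for y
    by (simp add: Rb_def Bin_def Emb_upd[OF u] lam_def)
  have Bin_le: "(\<integral>\<^sup>+y. Bin y \<partial>Nr) \<le> ennreal (C / real n)"
    using m' by (simp add: H_def RbBin)
  have Binm[measurable]: "Bin \<in> borel_measurable Nr"
    unfolding Bin_def by measurable
  have pGN: "prob_space ?GN" by (rule prob_space_PiM) (rule prob_space_gauss0)
  define Q where "Q y T = (\<integral>\<^sup>+Z. ennreal ((g_integrand f n u lam T Z - y)\<^sup>2) \<partial>?GN)" for y T
  have Qm: "Q y \<in> borel_measurable (PiM {..<n} (\<lambda>_. borel))" for y
    unfolding Q_def g_integrand_def by measurable
  have chain: "(\<integral>\<^sup>+T. Q y T \<partial>samples n (density lborel (normal_density y 1))) = Bin y" for y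
  proof -
    define \<Psi> where "\<Psi> W = ennreal ((inner u (f (\<lambda>i\<in>{..<n}. W i + (y *\<^sub>R u + lam))) - y)\<^sup>2)" for W
    have \<Psi>m: "\<Psi> \<in> borel_measurable ?GN" unfolding \<Psi>_def by measurable
    have "(\<integral>\<^sup>+T. Q y T \<partial>samples n (density lborel (normal_density y 1)))
        = (\<integral>\<^sup>+S. Q y (\<lambda>i\<in>{..<n}. S i + y) \<partial>PiM {..<n} (\<lambda>_. std_normal_distribution))"
      by (rule normal_samples_nn[OF Qm])
    also have "\<dots> = (\<integral>\<^sup>+S. (\<integral>\<^sup>+Z. \<Psi> (\<lambda>i\<in>{..<n}. S i *\<^sub>R u + (Z i - inner u (Z i) *\<^sub>R u)) \<partial>?GN) \<partial>PiM {..<n} (\<lambda>_. std_normal_distribution))"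
      unfolding Q_def
    proof (intro nn_integral_cong)
      fix S Z
      have "(\<lambda>i\<in>{..<n}. (\<lambda>i\<in>{..<n}. S i + y) i *\<^sub>R u + (lam + (Z i - inner u (Z i) *\<^sub>R u)))
          = (\<lambda>i\<in>{..<n}. (\<lambda>i\<in>{..<n}. S i *\<^sub>R u + (Z i - inner u (Z i) *\<^sub>R u)) i + (y *\<^sub>R u + lam))"
        by (auto simp: fun_eq_iff algebra_simps)
      then show "ennreal ((g_integrand f n u lam (\<lambda>i\<in>{..<n}. S i + y) Z - y)\<^sup>2) = \<Psi> (\<lambda>i\<in>{..<n}. S i *\<^sub>R u + (Z i - inner u (Z i) *\<^sub>R u))"
        unfolding g_integrand_def \<Psi>_def by simp
    qed
    also have "\<dots> = (\<integral>\<^sup>+Z. \<Psi> Z \<partial>?GN)"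
      by (rule key_identity[OF u finite_lessThan \<Psi>m])
    also have "\<dots> = Bin y" by (simp add: \<Psi>_def Bin_def)
    finally show ?thesis .
  qed
  have gm: "g_integrand f n u lam T \<in> borel_measurable ?GN" for T
    unfolding g_integrand_def by measurable
  have jen: "ennreal ((g_est f n u lam T - y)\<^sup>2) \<le> Q y T" for y T
    unfolding g_est_def Q_def samples_def by (rule jensen_sq2[OF pGN gm])
  have bound: "(\<integral>\<^sup>+y. (\<integral>\<^sup>+T. ennreal ((g_est f n u lam T - y)\<^sup>2) \<partial>samples n (density lborel (normal_density y 1))) \<partial>Nr) \<le> ennreal (C / real n)"
  proof -
    have "(\<integral>\<^sup>+y. (\<integral>\<^sup>+T. ennreal ((g_est f n u lam T - y)\<^sup>2) \<partial>samples n (density lborel (normal_density y 1))) \<partial>Nr)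
        \<le> (\<integral>\<^sup>+y. (\<integral>\<^sup>+T. Q y T \<partial>samples n (density lborel (normal_density y 1))) \<partial>Nr)"
      by (intro nn_integral_mono jen)
    also have "\<dots> = (\<integral>\<^sup>+y. Bin y \<partial>Nr)" by (simp add: chain)
    finally show ?thesis using Bin_le by (rule order_trans)
  qed
  have AEpart: "AE y in Nr. AE T in samples n (density lborel (normal_density y 1)). integrable (samples n (gauss 0)) (g_integrand f n u lam T)"
  proof -
    have "(\<integral>\<^sup>+y. Bin y \<partial>Nr) \<noteq> \<infinity>"
      using Bin_le by (auto simp: top_unique)
    then have "AE y in Nr. Bin y \<noteq> \<infinity>" by (rule nn_integral_PInf_AE[OF Binm])
    then show ?thesis
    proof (rule eventually_mono)
      fix y assume "Bin y \<noteq> \<infinity>"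
      then have fin: "(\<integral>\<^sup>+T. Q y T \<partial>samples n (density lborel (normal_density y 1))) \<noteq> \<infinity>"
        using chain by simp
      have sQ: "sets (samples n (density lborel (normal_density y 1))) = sets (PiM {..<n} (\<lambda>_. borel))"
        unfolding samples_def by (intro sets_PiM_cong) auto
      have "Q y \<in> borel_measurable (samples n (density lborel (normal_density y 1)))"
        using Qm[of y] by (simp add: measurable_cong_sets[OF sQ refl])
      then have "AE T in samples n (density lborel (normal_density y 1)). Q y T \<noteq> \<infinity>"
        using fin by (rule nn_integral_PInf_AE)
      then show "AE T in samples n (density lborel (normal_density y 1)). integrable (samples n (gauss 0)) (g_integrand f n u lam T)"
        by (rule eventually_mono) (auto simp: samples_def Q_def intro: jensen_sq(1)[OF pGN gm])
    qed
  qed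
  show ?thesis
    using u1 ulam AEpart[unfolded Nr_def] bound[unfolded Nr_def] by blast
qed

end
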